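(* For a (nondegenerate) triangle $AB\Gamma$, let $\ell_1$ be the line perpendicular to $AB$ through $B$, $\ell_2$ the line perpendicular to $B\Gamma$ through $\Gamma$, and $\ell_3$ the line perpendicular to $\Gamma A$ through $A$, and let $A'B'\Gamma'$ be the triangle bounded by these three lines. Let $E$ and $E'$ be the areas of $AB\Gamma$ and $A'B'\Gamma'$. Then, over all such pairs in which the triangles are right triangles, the minimum value of $E'/E$ is $4$, attained exactly when the triangles are isosceles right triangles. *)

theory Defs
  imports "HOL-Analysis.Analysis"
begin

type_synonym point = "real \<times> real"

definition perp_line :: "point \<Rightarrow> point \<Rightarrow> point set" where
  "perp_line P Q = {X. inner (X - P) (Q - P) = 0}"

definition tri_area :: "point \<Rightarrow> point \<Rightarrow> point \<Rightarrow> real" where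
  "tri_area A B C = \<bar>(fst B - fst A) * (snd C - snd A) - (snd B - snd A) * (fst C - fst A)\<bar> / 2"

definition right_at :: "point \<Rightarrow> point \<Rightarrow> point \<Rightarrow> bool" where
  "right_at A B C \<longleftrightarrow> inner (B - A) (C - A) = 0"

definition right_triangle :: "point \<Rightarrow> point \<Rightarrow> point \<Rightarrow> bool" where
  "right_triangle A B C \<longleftrightarrow> \<not> collinear {A, B, C} \<and>
     (right_at A B C \<or> right_at B C A \<or> right_at C A B)"

definition isosceles_right_triangle :: "point \<Rightarrow> point \<Rightarrow> point \<Rightarrow> bool" where
  "isosceles_right_triangle A B C \<longleftrightarrow> \<not> collinear {A, B, C} \<and>
     ((right_at A B C \<and> dist A B = dist A C) \<or>
      (right_at B C A \<and> dist B C = dist B A) \<or>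
      (right_at C A B \<and> dist C A = dist C B))"

text \<open>A' B' C' is the triangle bounded by l1 = perpendicular to AB at B,
  l2 = perpendicular to BC at C, l3 = perpendicular to CA at A:
  C' = l1 \<inter> l2, A' = l2 \<inter> l3, B' = l3 \<inter> l1.\<close>
definition outer_triangle :: "point \<Rightarrow> point \<Rightarrow> point \<Rightarrow> point \<Rightarrow> point \<Rightarrow> point \<Rightarrow> bool" where
  "outer_triangle A B C A' B' C' \<longleftrightarrow>
     C' \<in> perp_line B A \<inter> perp_line C B \<and>
     A' \<in> perp_line C B \<inter> perp_line A C \<and>
     B' \<in> perp_line A C \<inter> perp_line B A"

end

theory Submission imports Defs begin

lemma core:
  fixes u1 u2 v1 v2 a1 a2 b1 b2 :: real
  assumes uv: "u1 * v1 + u2 * v2 = 0"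
    and up: "u1^2+u2^2 > 0" and vp: "v1^2+v2^2 > 0"
    and a1: "a1 * v1 + a2 * v2 = 0" and a2: "a1 * u1 + a2 * u2 = (u1^2+u2^2) + (v1^2+v2^2)"
    and b1: "b1 * u1 + b2 * u2 = 0" and b2: "b1 * v1 + b2 * v2 = -(u1^2+u2^2)"
  shows "(a1 * (b2-v2) - a2 * (b1-v1))  *  (u1 * v2-u2 * v1) = -(((u1^2+u2^2) + (v1^2+v2^2))^2)"
    and "(u1 * v2-u2 * v1)^2 = (u1^2+u2^2) * (v1^2+v2^2)"
proof -
  define p where "p = u1^2+u2^2"
  define q where "q = v1^2+v2^2"
  define D where "D = u1 * v2-u2 * v1"
  have DD: "D^2 = p * q"
  proof -
    have "D^2 + (u1 * v1 + u2 * v2)^2 = p * q" unfolding D_def p_def q_def by algebra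
    thus ?thesis using uv by simp
  qed
  then show "(u1 * v2-u2 * v1)^2 = (u1^2+u2^2) * (v1^2+v2^2)" unfolding D_def p_def q_def .
  have D0: "D \<noteq> 0" using DD up vp unfolding p_def q_def by auto
  have ea1: "D * a1 = (p+q) * v2"
    using a1 a2 unfolding D_def p_def q_def by algebra
  have ea2: "D * a2 = -(p+q) * v1"
    using a1 a2 unfolding D_def p_def q_def by algebra
  have eb1: "D * b1 = p * u2"
    using b1 b2 unfolding D_def p_def q_def by algebra
  have eb2: "D * b2 = -p * u1"
    using b1 b2 unfolding D_def p_def q_def by algebra
  have "D^2  *  (a1 * (b2-v2) - a2 * (b1-v1)) = (D * a1) * (D * b2 - D * v2) - (D * a2) * (D * b1-D * v1)"
    by (simp add: algebra_simps power2_eq_square)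
  also have "\<dots> = (p+q) * v2 * (-p * u1 - D * v2) - (-(p+q) * v1) * (p * u2-D * v1)"
    by (simp only: ea1 ea2 eb1 eb2)
  also have "\<dots> = -(p+q) * (p * D + D * q)" unfolding D_def q_def by algebra
  finally have "D  *  (D  *  (a1 * (b2-v2) - a2 * (b1-v1))) = D  *  (- ((p+q)^2))"
    by (simp add: power2_eq_square algebra_simps)
  hence "D  *  (a1 * (b2-v2) - a2 * (b1-v1)) = - ((p+q)^2)" using D0 by (metis mult_left_cancel mult_minus_right)
  thus "(a1 * (b2-v2) - a2 * (b1-v1))  *  (u1 * v2-u2 * v1) = -(((u1^2+u2^2) + (v1^2+v2^2))^2)"
    unfolding D_def p_def q_def by (simp add: mult.commute)
qed

lemma caseB:
  assumes nc: "\<not> collinear {A,B,C}" and r: "right_at B C A"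
    and o: "outer_triangle A B C A' B' C'"
  shows "tri_area A B C > 0"
    and "\<not> right_at A B C" and "\<not> right_at C A B"
    and "tri_area A' B' C' / tri_area A B C
         = ((dist B A)^2 + (dist B C)^2)^2 / ((dist B A)^2 * (dist B C)^2)"
proof -
  obtain xa ya where A: "A = (xa,ya)" by (cases A)
  obtain xb yb where B: "B = (xb,yb)" by (cases B)
  obtain xc yc where C: "C = (xc,yc)" by (cases C)
  obtain xa' ya' where A': "A' = (xa',ya')" by (cases A')
  obtain xb' yb' where B': "B' = (xb',yb')" by (cases B')
  obtain xc' yc' where C': "C' = (xc',yc')" by (cases C')
  define u1 where "u1 = xa - xb"
  define u2 where "u2 = ya - yb"
  define v1 where "v1 = xc - xb"
  define v2 where "v2 = yc - yb"
  define p where "p = u1^2+u2^2"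
  define q where "q = v1^2+v2^2"
  define D where "D = u1 * v2 - u2 * v1"
  have AB: "A \<noteq> B" using nc by auto
  have CB: "C \<noteq> B" using nc by auto
  have pp: "p > 0"
  proof -
    have "p \<noteq> 0"
    proof
      assume "p = 0"
      hence "u1 = 0 \<and> u2 = 0" unfolding p_def by (simp add: sum_power2_eq_zero_iff)
      hence "A = B" unfolding A B u1_def u2_def by simp
      thus False using AB by simp
    qed
    moreover have "p \<ge> 0" unfolding p_def by simp
    ultimately show ?thesis by linarith
  qed
  have qp: "q > 0"
  proof -
    have "q \<noteq> 0"
    proof
      assume "q = 0"
      hence "v1 = 0 \<and> v2 = 0" unfolding q_def by (simp add: sum_power2_eq_zero_iff)
      hence "C = B" unfolding C B v1_def v2_def by simp
      thus False using CB by simp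
    qed
    moreover have "q \<ge> 0" unfolding q_def by simp
    ultimately show ?thesis by linarith
  qed
  have uv: "u1 * v1 + u2 * v2 = 0" using r unfolding right_at_def A B C u1_def u2_def v1_def v2_def
    by (simp add: inner_Pair algebra_simps)
  from o have e0: "(xc' - xb) * (xa - xb) + (yc' - yb) * (ya - yb) = 0"
      "(xc' - xc) * (xb - xc) + (yc' - yc) * (yb - yc) = 0"
      "(xa' - xc) * (xb - xc) + (ya' - yc) * (yb - yc) = 0"
      "(xa' - xa) * (xc - xa) + (ya' - ya) * (yc - ya) = 0"
      "(xb' - xa) * (xc - xa) + (yb' - ya) * (yc - ya) = 0"
      "(xb' - xb) * (xa - xb) + (yb' - yb) * (ya - yb) = 0"
    unfolding outer_triangle_def perp_line_def A B C A' B' C'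
    by (simp_all add: inner_Pair)
  have e: "(xc' - xb) * u1 + (yc' - yb) * u2 = 0"
      "(xc' - xc) * v1 + (yc' - yc) * v2 = 0"
      "(xa' - xc) * v1 + (ya' - yc) * v2 = 0"
      "(xa' - xa) * (v1 - u1) + (ya' - ya) * (v2 - u2) = 0"
      "(xb' - xa) * (v1 - u1) + (yb' - ya) * (v2 - u2) = 0"
      "(xb' - xb) * u1 + (yb' - yb) * u2 = 0"
  proof -
    show "(xc' - xb) * u1 + (yc' - yb) * u2 = 0" using e0(1) unfolding u1_def u2_def .
    show "(xb' - xb) * u1 + (yb' - yb) * u2 = 0" using e0(6) unfolding u1_def u2_def .
    have "(xc' - xc) * v1 + (yc' - yc) * v2 = - ((xc' - xc) * (xb - xc) + (yc' - yc) * (yb - yc))"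
      unfolding v1_def v2_def by (simp add: algebra_simps)
    thus "(xc' - xc) * v1 + (yc' - yc) * v2 = 0" using e0(2) by simp
    have "(xa' - xc) * v1 + (ya' - yc) * v2 = - ((xa' - xc) * (xb - xc) + (ya' - yc) * (yb - yc))"
      unfolding v1_def v2_def by (simp add: algebra_simps)
    thus "(xa' - xc) * v1 + (ya' - yc) * v2 = 0" using e0(3) by simp
    have "v1 - u1 = xc - xa" "v2 - u2 = yc - ya" unfolding u1_def u2_def v1_def v2_def by simp_all
    thus "(xa' - xa) * (v1 - u1) + (ya' - ya) * (v2 - u2) = 0"
      "(xb' - xa) * (v1 - u1) + (yb' - ya) * (v2 - u2) = 0" using e0(4) e0(5) by simp_all
  qed
  have DD: "D^2 = p * q"
  proof -
    have "D^2 + (u1 * v1 + u2 * v2)^2 = p * q" unfolding D_def p_def q_def by algebra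
    thus ?thesis using uv by simp
  qed
  have D0: "D \<noteq> 0" using DD pp qp by auto
  have "D * (xc' - xc) = v2 * (((xc' - xb) * u1 + (yc' - yb) * u2) - (u1 * v1 + u2 * v2))
      - u2 * ((xc' - xc) * v1 + (yc' - yc) * v2)"
    unfolding D_def u1_def u2_def v1_def v2_def by (simp add: algebra_simps)
  hence "D * (xc' - xc) = 0" using e(1) e(2) uv by simp
  hence xc': "xc' = xc" using D0 by simp
  have "D * (yc' - yc) = u1 * ((xc' - xc) * v1 + (yc' - yc) * v2)
      - v1 * (((xc' - xb) * u1 + (yc' - yb) * u2) - (u1 * v1 + u2 * v2))"
    unfolding D_def u1_def u2_def v1_def v2_def by (simp add: algebra_simps)
  hence "D * (yc' - yc) = 0" using e(1) e(2) uv by simp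
  hence yc': "yc' = yc" using D0 by simp
  define a1 where "a1 = xa' - xc"
  define a2 where "a2 = ya' - yc"
  define b1 where "b1 = xb' - xb"
  define b2 where "b2 = yb' - yb"
  have ha1: "a1 * v1 + a2 * v2 = 0" using e(3) unfolding a1_def a2_def .
  have ha2: "a1 * u1 + a2 * u2 = (u1^2+u2^2) + (v1^2+v2^2)"
    using e(4) ha1 uv unfolding a1_def a2_def u1_def u2_def v1_def v2_def
    by (simp add: algebra_simps power2_eq_square) 
  have hb1: "b1 * u1 + b2 * u2 = 0" using e(6) unfolding b1_def b2_def .
  have hb2: "b1 * v1 + b2 * v2 = -(u1^2+u2^2)"
    using e(5) hb1 uv unfolding b1_def b2_def u1_def u2_def v1_def v2_def
    by (simp add: algebra_simps power2_eq_square)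
  have X: "(a1 * (b2-v2) - a2 * (b1-v1)) * D = - ((p + q)^2)"
    using core(1)[OF uv _ _ ha1 ha2 hb1 hb2] pp qp unfolding p_def q_def D_def by simp
  have T: "tri_area A B C = \<bar>D\<bar> / 2"
    unfolding tri_area_def A B C D_def u1_def u2_def v1_def v2_def by (simp add: algebra_simps)
  have T': "tri_area A' B' C' = \<bar>a1 * (b2-v2) - a2 * (b1-v1)\<bar> / 2"
    unfolding tri_area_def A' B' C' xc' yc' a1_def a2_def b1_def b2_def v1_def v2_def
    by (simp add: algebra_simps)
  show "tri_area A B C > 0" using T D0 by simp
  have "inner (B - A) (C - A) = p - (u1 * v1 + u2 * v2)"
    unfolding A B C p_def u1_def u2_def v1_def v2_def by (simp add: inner_Pair algebra_simps power2_eq_square)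
  thus "\<not> right_at A B C" unfolding right_at_def using uv pp by simp
  have "inner (A - C) (B - C) = q - (u1 * v1 + u2 * v2)"
    unfolding A B C q_def u1_def u2_def v1_def v2_def by (simp add: inner_Pair algebra_simps power2_eq_square)
  thus "\<not> right_at C A B" unfolding right_at_def using uv qp by simp
  have dA: "(dist B A)^2 = p" unfolding B A p_def u1_def u2_def dist_Pair_Pair dist_real_def
    by (simp add: power2_commute)
  have dC: "(dist B C)^2 = q" unfolding B C q_def v1_def v2_def dist_Pair_Pair dist_real_def
    by (simp add: power2_commute)
  have "tri_area A' B' C' / tri_area A B C = \<bar>a1 * (b2-v2) - a2 * (b1-v1)\<bar> / \<bar>D\<bar>"
    unfolding T T' by simp
  also have "\<dots> = \<bar>(a1 * (b2-v2) - a2 * (b1-v1)) * D\<bar> / D^2"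
    proof -
    have "\<bar>D\<bar> * \<bar>D\<bar> = D^2" by (simp add: power2_eq_square)
    moreover have "\<bar>a1 * (b2-v2) - a2 * (b1-v1)\<bar> / \<bar>D\<bar>
       = \<bar>a1 * (b2-v2) - a2 * (b1-v1)\<bar> * \<bar>D\<bar> / (\<bar>D\<bar> * \<bar>D\<bar>)"
      using D0 by (simp only: nonzero_mult_divide_mult_cancel_right abs_eq_0 not_False_eq_True)
    ultimately show ?thesis by (simp add: abs_mult)
  qed
  also have "\<dots> = (p+q)^2 / (p * q)" using X DD by simp
  finally show "tri_area A' B' C' / tri_area A B C
         = ((dist B A)^2 + (dist B C)^2)^2 / ((dist B A)^2 * (dist B C)^2)"
    using dA dC by simp
qed

lemma caseB_full:
  assumes nc: "\<not> collinear {A,B,C}" and r: "right_at B C A"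
    and o: "outer_triangle A B C A' B' C'"
  shows "tri_area A' B' C' / tri_area A B C \<ge> 4 \<and>
         (tri_area A' B' C' / tri_area A B C = 4 \<longleftrightarrow> isosceles_right_triangle A B C)"
proof -
  note cB = caseB[OF nc r o]
  define p where "p = (dist B A)^2"
  define q where "q = (dist B C)^2"
  have pp: "p > 0" unfolding p_def using nc by (auto simp: insert_commute)
  have qp: "q > 0" unfolding q_def using nc by (auto simp: insert_commute)
  have R: "tri_area A' B' C' / tri_area A B C = (p+q)^2/(p*q)" using cB(4) unfolding p_def q_def .
  have "(p+q)^2 - 4*(p*q) = (p-q)^2" by (simp add: power2_eq_square algebra_simps)
  hence ge: "(p+q)^2 \<ge> 4*(p*q)" by (smt (verit) zero_le_power2)
  have pq: "p*q > 0" using pp qp by simp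
  show ?thesis
  proof
    show "tri_area A' B' C' / tri_area A B C \<ge> 4" unfolding R using ge pq
      by (simp add: pos_le_divide_eq)
    have "(p+q)^2/(p*q) = 4 \<longleftrightarrow> p = q"
    proof -
      have "(p+q)^2/(p*q) = 4 \<longleftrightarrow> (p+q)^2 = 4*(p*q)" using pp qp by (simp add: divide_eq_eq)
      also have "\<dots> \<longleftrightarrow> (p-q)^2 = 0" using \<open>(p+q)^2 - 4*(p*q) = (p-q)^2\<close> by linarith
      finally show ?thesis by simp
    qed
    moreover have "p = q \<longleftrightarrow> dist B C = dist B A" unfolding p_def q_def
      by (metis power2_eq_iff_nonneg zero_le_dist)
    moreover have "isosceles_right_triangle A B C \<longleftrightarrow> dist B C = dist B A"
      unfolding isosceles_right_triangle_def using nc r cB(2) cB(3) by auto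
    ultimately show "tri_area A' B' C' / tri_area A B C = 4 \<longleftrightarrow> isosceles_right_triangle A B C"
      unfolding R by simp
  qed
qed

lemma cyc_area: "tri_area B C A = tri_area A B C"
  unfolding tri_area_def by (simp add: algebra_simps)

lemma cyc_outer: "outer_triangle B C A B' C' A' = outer_triangle A B C A' B' C'"
  unfolding outer_triangle_def by auto

lemma cyc_iso: "isosceles_right_triangle B C A = isosceles_right_triangle A B C"
  unfolding isosceles_right_triangle_def by (auto simp: insert_commute dist_commute)

lemma cyc_coll: "collinear {B,C,A} = collinear {A,B,C}"
  by (simp add: insert_commute)

lemma cyc_Q:
  assumes "\<not> collinear {B,C,A} \<and> outer_triangle B C A B' C' A' \<longrightarrow>
    tri_area B' C' A' / tri_area B C A \<ge> 4 \<and>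
         (tri_area B' C' A' / tri_area B C A = 4 \<longleftrightarrow> isosceles_right_triangle B C A)"
  shows "\<not> collinear {A,B,C} \<and> outer_triangle A B C A' B' C' \<longrightarrow>
    tri_area A' B' C' / tri_area A B C \<ge> 4 \<and>
         (tri_area A' B' C' / tri_area A B C = 4 \<longleftrightarrow> isosceles_right_triangle A B C)"
  using assms by (simp only: cyc_area cyc_outer cyc_iso cyc_coll)

lemma noncoll_ex: "\<not> collinear {(1::real,0::real), (0,0), (0,1)}"
proof
  assume "collinear {(1::real,0::real), (0,0), (0,1)}"
  then obtain u :: "real \<times> real" where
    H: "\<forall>x\<in>{(1::real,0::real), (0,0), (0,1)}. \<forall>y\<in>{(1::real,0::real), (0,0), (0,1)}. \<exists>c. x - y = c *\<^sub>R u"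
    unfolding collinear_def by blast
  obtain c1 where c1: "(1::real,0::real) - (0,0) = c1 *\<^sub>R u" using H by blast
  obtain c2 where c2: "(0::real,1::real) - (0,0) = c2 *\<^sub>R u" using H by blast
  obtain u1 u2 where U: "u = (u1,u2)" by (cases u)
  have "c1 * u1 = 1" "c1 * u2 = 0" "c2 * u1 = 0" "c2 * u2 = 1" using c1 c2 U by simp_all
  thus False by (metis mult_eq_0_iff zero_neq_one)
qed

theorem mainTheorem3:
  shows "(\<forall>A B C A' B' C'. right_triangle A B C \<and> outer_triangle A B C A' B' C' \<longrightarrow>
            tri_area A' B' C' / tri_area A B C \<ge> 4 \<and>
            (tri_area A' B' C' / tri_area A B C = 4 \<longleftrightarrow> isosceles_right_triangle A B C))
         \<and> (\<exists>A B C A' B' C'. right_triangle A B C \<and> outer_triangle A B C A' B' C' \<and>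
            tri_area A' B' C' / tri_area A B C = 4)"
proof
  show "\<forall>A B C A' B' C'. right_triangle A B C \<and> outer_triangle A B C A' B' C' \<longrightarrow>
            tri_area A' B' C' / tri_area A B C \<ge> 4 \<and>
            (tri_area A' B' C' / tri_area A B C = 4 \<longleftrightarrow> isosceles_right_triangle A B C)"
  proof (intro allI impI)
    fix A B C A' B' C' :: point
    assume h: "right_triangle A B C \<and> outer_triangle A B C A' B' C'"
    hence nc: "\<not> collinear {A,B,C}" and o: "outer_triangle A B C A' B' C'"
      and r: "right_at A B C \<or> right_at B C A \<or> right_at C A B"
      unfolding right_triangle_def by auto
    from r show "tri_area A' B' C' / tri_area A B C \<ge> 4 \<and>
            (tri_area A' B' C' / tri_area A B C = 4 \<longleftrightarrow> isosceles_right_triangle A B C)"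
    proof (elim disjE)
      assume "right_at B C A" thus ?thesis using caseB_full nc o by blast
    next
      assume ra: "right_at A B C"
      have "\<not> collinear {C,A,B} \<and> outer_triangle C A B C' A' B' \<longrightarrow>
         tri_area C' A' B' / tri_area C A B \<ge> 4 \<and>
         (tri_area C' A' B' / tri_area C A B = 4 \<longleftrightarrow> isosceles_right_triangle C A B)"
        using caseB_full[of C A B, OF _ ra] by blast
      hence "\<not> collinear {B,C,A} \<and> outer_triangle B C A B' C' A' \<longrightarrow>
         tri_area B' C' A' / tri_area B C A \<ge> 4 \<and>
         (tri_area B' C' A' / tri_area B C A = 4 \<longleftrightarrow> isosceles_right_triangle B C A)"
        by (rule cyc_Q)
      hence "\<not> collinear {A,B,C} \<and> outer_triangle A B C A' B' C' \<longrightarrow>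
         tri_area A' B' C' / tri_area A B C \<ge> 4 \<and>
         (tri_area A' B' C' / tri_area A B C = 4 \<longleftrightarrow> isosceles_right_triangle A B C)"
        by (rule cyc_Q)
      thus ?thesis using nc o by blast
    next
      assume rc: "right_at C A B"
      have "\<not> collinear {B,C,A} \<and> outer_triangle B C A B' C' A' \<longrightarrow>
         tri_area B' C' A' / tri_area B C A \<ge> 4 \<and>
         (tri_area B' C' A' / tri_area B C A = 4 \<longleftrightarrow> isosceles_right_triangle B C A)"
        using caseB_full[of B C A, OF _ rc] by blast
      hence "\<not> collinear {A,B,C} \<and> outer_triangle A B C A' B' C' \<longrightarrow>
         tri_area A' B' C' / tri_area A B C \<ge> 4 \<and>
         (tri_area A' B' C' / tri_area A B C = 4 \<longleftrightarrow> isosceles_right_triangle A B C)"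
        by (rule cyc_Q)
      thus ?thesis using nc o by blast
    qed
  qed
next
  have r: "right_triangle (1,0) (0,0) (0,1)"
    unfolding right_triangle_def right_at_def using noncoll_ex by (simp add: inner_Pair)
  have o: "outer_triangle (1,0) (0,0) (0,1) (2,1) (0,-1) (0,1)"
    unfolding outer_triangle_def perp_line_def by (simp add: inner_Pair)
  have a: "tri_area (2,1) (0,-1) (0,1) / tri_area (1,0) (0,0) (0,1) = 4"
    unfolding tri_area_def by simp
  show "\<exists>A B C A' B' C'. right_triangle A B C \<and> outer_triangle A B C A' B' C' \<and>
            tri_area A' B' C' / tri_area A B C = 4"
    using r o a by blast
qed

end
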